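(* Let $A\in\mathbb{R}^{n\times n}$ and $B\in\mathbb{R}^{n\times m}$ with $(A,B)$ controllable. Let $E(\alpha)$ and $F(\alpha)$ be real polynomial matrices in the scalar indeterminate $\alpha\in\mathbb{R}$, of sizes $n\times n$ and $n\times m$ respectively, with $E(0)=0$ and $F(0)=0$. Then there exists $\bar\alpha>0$ such that $(A+E(\alpha),B+F(\alpha))$ is controllable for all $\alpha\in\mathbb{R}$ with $|\alpha|\ge\bar\alpha$.
   Context: A pair $(A,B)$ is controllable if $\operatorname{rank}[B\ AB\ \cdots\ A^{n-1}B]=n$. *)

theory Defs
  imports "HOL-Analysis.Analysis" "HOL-Computational_Algebra.Polynomial"
begin

text \<open>Matrix power A^k for square matrices.\<close>
primrec mpow :: "real^'n^'n \<Rightarrow> nat \<Rightarrow> real^'n^'n" where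
  "mpow A 0 = mat 1"
| "mpow A (Suc k) = A ** mpow A k"

text \<open>A fixed enumeration of the finite index type 'n by 0,...,CARD('n)-1.
  It is used to order the blocks of the controllability matrix; the rank does
  not depend on the particular enumeration.\<close>
definition blk_idx :: "'n::finite \<Rightarrow> nat" where
  "blk_idx = (SOME f. bij_betw f (UNIV :: 'n set) {..<CARD('n)})"

text \<open>Controllability matrix [B, AB, ..., A^(n-1) B]; column (j,k) is column j
  of the block A^(blk_idx k) B.\<close>
definition ctrb_matrix :: "real^'n^'n \<Rightarrow> real^'m^'n \<Rightarrow> real^('m \<times> 'n)^'n" where
  "ctrb_matrix A B = (\<chi> i. \<chi> c. (mpow A (blk_idx (snd c)) ** B) $ i $ fst c)"

definition controllable :: "real^'n^'n \<Rightarrow> real^'m^'n \<Rightarrow> bool" where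
  "controllable A B \<longleftrightarrow> rank (ctrb_matrix A B) = CARD('n)"

text \<open>Entrywise evaluation of a polynomial matrix at a real number.\<close>
definition peval :: "real poly^'m^'n \<Rightarrow> real \<Rightarrow> real^'m^'n" where
  "peval E a = (\<chi> i j. poly (E $ i $ j) a)"

end

theory Submission
  imports Defs
begin

primrec gp :: "'a::semiring_1^'n^'n \<Rightarrow> nat \<Rightarrow> 'a^'n^'n" where
  "gp A 0 = mat 1"
| "gp A (Suc k) = A ** gp A k"

lemma peval_add: "peval (X + Y) a = peval X a + peval Y a"
  by (simp add: peval_def vec_eq_iff)

lemma peval_mult: "peval (X ** Y) a = peval X a ** peval Y a"
  by (simp add: peval_def vec_eq_iff matrix_matrix_mult_def poly_sum)

lemma peval_transpose: "peval (transpose X) a = transpose (peval X a)"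
  by (simp add: peval_def vec_eq_iff transpose_def)

lemma peval_mat1: "peval (mat 1) a = mat 1"
  by (simp add: peval_def vec_eq_iff mat_def)

lemma peval_gp: "peval (gp X k) a = mpow (peval X a) k"
  by (induction k) (simp_all add: peval_mat1 peval_mult)

lemma peval_det: "poly (det X) a = det (peval X a)"
  unfolding det_def by (simp add: peval_def poly_sum poly_prod)

lemma peval_blk: "peval (\<chi> i c. (f (snd c)) $ i $ fst c) a = (\<chi> i c. peval (f (snd c)) a $ i $ fst c)"
  by (simp add: peval_def vec_eq_iff)

definition cm :: "real^'m^'n \<Rightarrow> real poly^'m^'n" where
  "cm A = (\<chi> i j. [:A$i$j:])"

lemma peval_cm: "peval (cm A) a = A"
  by (simp add: peval_def cm_def vec_eq_iff)

lemma full_rank_det: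
  fixes M :: "real^'k^'n"
  shows "rank M = CARD('n) \<longleftrightarrow> det (M ** transpose M) \<noteq> 0"
proof
  assume r: "rank M = CARD('n)"
  have "inj ((*v) (transpose M))"
    using r rank_transpose[of M] full_rank_injective[of "transpose M"] by simp
  have "inj ((*v) (M ** transpose M))"
  proof (rule linear_injective_0[THEN iffD2])
    show "linear ((*v) (M ** transpose M))" by simp
    show "\<forall>x. (M ** transpose M) *v x = 0 \<longrightarrow> x = 0"
    proof (intro allI impI)
      fix x assume "(M ** transpose M) *v x = 0"
      then have "x \<bullet> (M *v (transpose M *v x)) = 0"
        by (metis matrix_vector_mul_assoc inner_zero_right)
      then have "(transpose M *v x) \<bullet> (transpose M *v x) = 0"
        by (metis dot_lmul_matrix inner_commute vector_transpose_matrix)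
      then have "transpose M *v x = 0" by simp
      then show "x = 0" using \<open>inj ((*v) (transpose M))\<close>
        by (metis injD matrix_vector_mult_0_right)
    qed
  qed
  then have "rank (M ** transpose M) = CARD('n)" by (simp add: full_rank_injective)
  then show "det (M ** transpose M) \<noteq> 0" by (simp add: det_eq_0_rank)
next
  assume "det (M ** transpose M) \<noteq> 0"
  then have "rank (M ** transpose M) = CARD('n)"
    using det_eq_0_rank rank_bound[of "M ** transpose M"] by fastforce
  then show "rank M = CARD('n)"
    using rank_mul_le_left[of M "transpose M"] rank_bound[of M] by linarith
qed

theorem lemma3:
  fixes A :: "real^'n^'n" and B :: "real^'m^'n"
    and E :: "real poly^'n^'n" and F :: "real poly^'m^'n"
  assumes "controllable A B"
    and "peval E 0 = 0" and "peval F 0 = 0"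
  shows "\<exists>abar > 0. \<forall>a::real. \<bar>a\<bar> \<ge> abar \<longrightarrow>
           controllable (A + peval E a) (B + peval F a)"
proof -
  define Ap where "Ap = cm A + E"
  define Bp where "Bp = cm B + F"
  define Cp :: "real poly^('m \<times> 'n)^'n" where
    "Cp = (\<chi> i c. (gp Ap (blk_idx (snd c)) ** Bp) $ i $ fst c)"
  define D where "D = det (Cp ** transpose Cp)"
  have evC: "peval Cp a = ctrb_matrix (A + peval E a) (B + peval F a)" for a
    unfolding Cp_def ctrb_matrix_def peval_blk[of "\<lambda>k. gp Ap (blk_idx k) ** Bp"]
    by (simp add: peval_mult peval_gp Ap_def Bp_def peval_add peval_cm)
  have evD: "poly D a \<noteq> 0 \<longleftrightarrow> controllable (A + peval E a) (B + peval F a)" for a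
    by (simp add: D_def peval_det peval_mult peval_transpose evC controllable_def full_rank_det)
  have "poly D 0 \<noteq> 0" using evD[of 0] assms by simp
  then have "D \<noteq> 0" by auto
  then have fin: "finite {x. poly D x = 0}" by (rule poly_roots_finite)
  define abar where "abar = 1 + (\<Sum>x\<in>{x. poly D x = 0}. \<bar>x\<bar>)"
  have "abar > 0" unfolding abar_def by (simp add: add_pos_nonneg sum_nonneg)
  moreover have "controllable (A + peval E a) (B + peval F a)" if "\<bar>a\<bar> \<ge> abar" for a
  proof (rule ccontr)
    assume "\<not> ?thesis"
    then have a: "a \<in> {x. poly D x = 0}" using evD[of a] by simp
    have "\<bar>a\<bar> \<le> (\<Sum>x\<in>{x. poly D x = 0}. \<bar>x\<bar>)"
      using member_le_sum[OF a _ fin, of abs] by simp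
    then show False using that unfolding abar_def by simp
  qed
  ultimately show ?thesis by blast
qed

end
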